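(* Let $k,q\ge0$, $p=k+q$, $m=2^p$, $n=2^q$, and $U=\frac{1}{\sqrt{2^p}}H(2^p)$. Fix an integer $c$ with $0\le c\le 2^k-1$ and the input state $\vec s=(1+nc,2+nc,\dots,n+nc)$ of $n$ identical particles. For an output state $\vec t=(t_1,\dots,t_n)$, define $t'_i=((t_i-1)\bmod n)+1$ and let $\vec t'$ be the nondecreasing rearrangement of $(t'_1,\dots,t'_n)$. Then $\vec t$ is suppressed for $U$ with input $\vec s$ if and only if $\vec t'$ is suppressed for $U'=\frac{1}{\sqrt{2^q}}H(2^q)$ with input $(1,2,\dots,n)$ (one particle per mode). This holds both when the particles are bosons and when they are fermions.
   Context: For $m=2^p$, the Sylvester matrix $H(m)$ is defined recursively by $H(1)=[1]$ and $H(2^p)=\begin{bmatrix}H(2^{p-1})&H(2^{p-1})\\ H(2^{p-1})&-H(2^{p-1})\end{bmatrix}$, rows and columns indexed $1,\dots,m$. An $n$-particle state on $m$ modes is a nondecreasing tuple $\vec t=(t_1\le\dots\le t_n)$ with $t_i\in\{1,\dots,m\}$; $\mu_k(\vec t)=|\{i:t_i=k\}|$. For input $\vec s$ and output $\vec t$ under unitary $U$, the scattering matrix is $S_{i,j}=U_{t_i,s_j}$; the bosonic amplitude is $\mathrm{perm}\,S/\sqrt{\prod_k\mu_k(\vec s)!\prod_k\mu_k(\vec t)!}$ and the fermionic amplitude is $\det S/\sqrt{\prod_k\mu_k(\vec s)!\prod_k\mu_k(\vec t)!}$. An output state is suppressed if its amplitude is zero. *)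

theory Defs
  imports Complex_Main "Jordan_Normal_Form.Determinant"
begin

text \<open>Sylvester matrix H(2^p), 1-indexed entries (i,j) with 1 \<le> i,j \<le> 2^p,
  defined by the block recursion H(2^(p+1)) = [[H, H],[H, -H]].\<close>
fun sylvester :: "nat \<Rightarrow> nat \<Rightarrow> nat \<Rightarrow> int" where
  "sylvester 0 i j = 1"
| "sylvester (Suc p) i j =
     (let h = 2 ^ p in
      if i \<le> h \<and> j \<le> h then sylvester p i j
      else if i \<le> h then sylvester p i (j - h)
      else if j \<le> h then sylvester p (i - h) j
      else - sylvester p (i - h) (j - h))"

definition unitary_H :: "nat \<Rightarrow> nat \<Rightarrow> nat \<Rightarrow> real" where
  "unitary_H p i j = real_of_int (sylvester p i j) / sqrt (2 ^ p)"

definition is_state :: "nat \<Rightarrow> nat \<Rightarrow> nat list \<Rightarrow> bool" where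
  "is_state m n t \<longleftrightarrow> length t = n \<and> sorted t \<and> set t \<subseteq> {1..m}"

definition occ :: "nat list \<Rightarrow> nat \<Rightarrow> nat" where
  "occ t k = count_list t k"

definition scattering :: "(nat \<Rightarrow> nat \<Rightarrow> real) \<Rightarrow> nat list \<Rightarrow> nat list \<Rightarrow> real mat" where
  "scattering U s t = mat (length t) (length s) (\<lambda>(i, j). U (t ! i) (s ! j))"

definition permanent :: "'a :: comm_ring_1 mat \<Rightarrow> 'a" where
  "permanent A = (\<Sum>p | p permutes {0..<dim_row A}. \<Prod>i = 0..<dim_row A. A $$ (i, p i))"

definition normalization :: "nat list \<Rightarrow> nat list \<Rightarrow> real" where
  "normalization s t = sqrt (real ((\<Prod>k\<in>set s. fact (occ s k)) * (\<Prod>k\<in>set t. fact (occ t k))))"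

definition boson_amp :: "(nat \<Rightarrow> nat \<Rightarrow> real) \<Rightarrow> nat list \<Rightarrow> nat list \<Rightarrow> real" where
  "boson_amp U s t = permanent (scattering U s t) / normalization s t"

definition fermion_amp :: "(nat \<Rightarrow> nat \<Rightarrow> real) \<Rightarrow> nat list \<Rightarrow> nat list \<Rightarrow> real" where
  "fermion_amp U s t = det (scattering U s t) / normalization s t"

definition suppressed_boson :: "(nat \<Rightarrow> nat \<Rightarrow> real) \<Rightarrow> nat list \<Rightarrow> nat list \<Rightarrow> bool" where
  "suppressed_boson U s t \<longleftrightarrow> boson_amp U s t = 0"

definition suppressed_fermion :: "(nat \<Rightarrow> nat \<Rightarrow> real) \<Rightarrow> nat list \<Rightarrow> nat list \<Rightarrow> bool" where
  "suppressed_fermion U s t \<longleftrightarrow> fermion_amp U s t = 0"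

definition fold_state :: "nat \<Rightarrow> nat list \<Rightarrow> nat list" where
  "fold_state n t = sort (map (\<lambda>x. (x - 1) mod n + 1) t)"

end

theory Submission
  imports Defs "HOL-Combinatorics.List_Permutation"
begin

lemma syl_pm: "sylvester p i j = 1 \<or> sylvester p i j = -1"
  by (induction p arbitrary: i j) (auto simp: Let_def)

lemma le_iff: "x < (2::nat)^q \<Longrightarrow> (a*2^q + x + 1 \<le> 2^(k+q)) = (a < 2^k)"
proof
  assume x: "x < 2^q" and h: "a*2^q + x + 1 \<le> 2^(k+q)"
  show "a < 2^k"
  proof (rule ccontr)
    assume "\<not> a < 2^k"
    then have "2^k*2^q \<le> a*(2::nat)^q" by simp
    moreover have "2^(k+q) = 2^k*(2::nat)^q" by (simp add: power_add)
    ultimately show False using h by linarith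
  qed
next
  assume x: "x < 2^q" and a: "a < 2^k"
  then have "a + 1 \<le> 2^k" by simp
  then have "(a+1)*2^q \<le> 2^k*(2::nat)^q" by (rule mult_right_mono) simp
  then show "a*2^q + x + 1 \<le> 2^(k+q)" using x by (simp add: power_add algebra_simps)
qed

lemma syl_split:
  "a < 2^k \<Longrightarrow> c < 2^k \<Longrightarrow> x < 2^q \<Longrightarrow> y < 2^q \<Longrightarrow>
   sylvester (k+q) (a*2^q + x + 1) (c*2^q + y + 1) = sylvester k (a+1) (c+1) * sylvester q (x+1) (y+1)"
proof (induction k arbitrary: a c)
  case 0
  then show ?case by simp
next
  case (Suc k)
  have ia: "(a*2^q + x + 1 \<le> 2^(k+q)) = (a < 2^k)" using le_iff Suc.prems by blast
  have ic: "(c*2^q + y + 1 \<le> 2^(k+q)) = (c < 2^k)" using le_iff Suc.prems by blast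
  have sa: "a*2^q + x + 1 - 2^(k+q) = (a - 2^k)*2^q + x + 1" if "\<not> a < 2^k"
  proof -
    have "2^k*2^q \<le> a*(2::nat)^q" using that by simp
    moreover have "2^(k+q) = 2^k*(2::nat)^q" by (simp add: power_add)
    moreover have "(a-2^k)*2^q = a*2^q - 2^k*(2::nat)^q" by (simp add: diff_mult_distrib)
    ultimately show ?thesis by linarith
  qed
  have sc: "c*2^q + y + 1 - 2^(k+q) = (c - 2^k)*2^q + y + 1" if "\<not> c < 2^k"
  proof -
    have "2^k*2^q \<le> c*(2::nat)^q" using that by simp
    moreover have "2^(k+q) = 2^k*(2::nat)^q" by (simp add: power_add)
    moreover have "(c-2^k)*2^q = c*2^q - 2^k*(2::nat)^q" by (simp add: diff_mult_distrib)
    ultimately show ?thesis by linarith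
  qed
  have a2: "a - 2^k < 2^k" "c - 2^k < 2^k" using Suc.prems by auto
  show ?case
    using Suc.IH[of a c] Suc.IH[of "a - 2^k" c] Suc.IH[of a "c - 2^k"] Suc.IH[of "a - 2^k" "c - 2^k"]
      Suc.prems ia ic sa sc a2
    by (auto simp: Let_def Suc_diff_le)
qed

lemma scale_rows:
  fixes A B :: "real mat"
  assumes A: "A \<in> carrier_mat n n" and B: "B \<in> carrier_mat n n"
    and e: "\<And>i j. i < n \<Longrightarrow> j < n \<Longrightarrow> A $$ (i,j) = e i * B $$ (i,j)"
  shows "det A = prod e {0..<n} * det B" "permanent A = prod e {0..<n} * permanent B"
proof -
  have pr: "(\<Prod>i = 0..<n. A $$ (i, p i)) = prod e {0..<n} * (\<Prod>i = 0..<n. B $$ (i, p i))"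
    if p: "p permutes {0..<n}" for p
  proof -
    have "(\<Prod>i = 0..<n. A $$ (i, p i)) = (\<Prod>i = 0..<n. e i * B $$ (i, p i))"
      using e permutes_in_image[OF p] by (intro prod.cong) auto
    then show ?thesis by (simp add: prod.distrib)
  qed
  show "det A = prod e {0..<n} * det B"
    unfolding det_def'[OF A] det_def'[OF B] sum_distrib_left
    by (intro sum.cong) (auto simp: pr)
  show "permanent A = prod e {0..<n} * permanent B"
    unfolding permanent_def sum_distrib_left using A B
    by (intro sum.cong) (auto simp: pr)
qed

lemma perm_rows:
  fixes A :: "real mat"
  assumes A: "A \<in> carrier_mat n n"
  and p: "p permutes {0 ..< (n :: nat)}"
  shows "permanent (mat n n (\<lambda> (i,j). A $$ (p i, j))) = permanent A"
proof -
  let ?U = "{0 ..< (n :: nat)}"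
  have "permanent (mat n n (\<lambda> (i,j). A $$ (p i, j))) = 
    (\<Sum> q \<in> {q . q permutes ?U}. (\<Prod> i \<in> ?U. A $$ (p i, q i)))"
    unfolding permanent_def using A p by (auto intro!: sum.cong prod.cong simp: permutes_in_image)
  also have "\<dots> = (\<Sum> q \<in> {q . q permutes ?U}. (\<Prod> i \<in> ?U. A $$ (p i, (q \<circ> p) i)))"
    by (rule sum_permutations_compose_right[OF p])
  also have "\<dots> = (\<Sum> q \<in> {q . q permutes ?U}. (\<Prod> i \<in> ?U. A $$ (i, q i)))"
  proof (rule sum.cong, simp)
    fix q
    assume "q \<in> {q . q permutes ?U}"
    then have q: "q permutes ?U" by simp
    let ?inv = "Hilbert_Choice.inv"
    from permutes_inv[OF p] have ip: "?inv p permutes ?U" .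
    have "prod (\<lambda>i. A $$ (p i, (q \<circ> p) i)) ?U = 
      prod (\<lambda>i. A $$ ((p \<circ> ?inv p) i, (q \<circ> (p \<circ> ?inv p)) i)) ?U" unfolding o_def
      by (rule trans[OF prod.permute[OF ip] prod.cong], insert A p q, auto)
    also have "\<dots> = prod (\<lambda>i. A$$(i,q i)) ?U"
      by (simp only: o_def permutes_inverses[OF p])
    finally show "prod (\<lambda>i. A $$ (p i, (q \<circ> p) i)) ?U = prod (\<lambda>i. A$$(i,q i)) ?U" .
  qed
  also have "\<dots> = permanent A" unfolding permanent_def using A by simp
  finally show ?thesis .
qed

lemma norm_pos: "normalization s t > 0"
  unfolding normalization_def
  by (simp add: prod_pos)

theorem proposition4:
  fixes k q c :: nat and t :: "nat list"
  assumes "c \<le> 2 ^ k - 1"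
    and "is_state (2 ^ (k + q)) (2 ^ q) t"
  shows "(suppressed_boson (unitary_H (k + q)) (map (\<lambda>i. i + 2 ^ q * c) [1..<2 ^ q + 1]) t
            \<longleftrightarrow> suppressed_boson (unitary_H q) [1..<2 ^ q + 1] (fold_state (2 ^ q) t))
       \<and> (suppressed_fermion (unitary_H (k + q)) (map (\<lambda>i. i + 2 ^ q * c) [1..<2 ^ q + 1]) t
            \<longleftrightarrow> suppressed_fermion (unitary_H q) [1..<2 ^ q + 1] (fold_state (2 ^ q) t))"
proof -
  define n :: nat where "n = 2^q"
  define s where "s = map (\<lambda>i. i + 2 ^ q * c) [1..<2 ^ q + 1]"
  define u where "u = map (\<lambda>x. (x - 1) mod n + 1) t"
  have c: "c < 2^k" using assms(1) by (metis Suc_pred' diff_le_self less_Suc_eq_le nat_less_le pos2 zero_less_power less_le_trans le_less_trans)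
  have lt: "length t = n" and tr: "\<And>x. x \<in> set t \<Longrightarrow> 1 \<le> x \<and> x \<le> 2^(k+q)"
    using assms(2) unfolding is_state_def n_def by auto
  have ls: "length s = n" unfolding s_def n_def by simp
  have sj: "s ! j = c*n + j + 1" if "j < n" for j
    using that unfolding s_def n_def by (simp add: nth_map algebra_simps del: upt_Suc)
  have lu: "length u = n" unfolding u_def using lt by simp
  have npos: "n > 0" unfolding n_def by simp
  define S where "S = scattering (unitary_H (k + q)) s t"
  define B where "B = scattering (unitary_H q) [1..<2 ^ q + 1] u"
  define S' where "S' = scattering (unitary_H q) [1..<2 ^ q + 1] (fold_state (2 ^ q) t)"
  have fs: "fold_state (2^q) t = sort u" unfolding fold_state_def u_def n_def by simp
  have SC: "S \<in> carrier_mat n n" unfolding S_def scattering_def using lt ls by simp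
  have BC: "B \<in> carrier_mat n n" unfolding B_def scattering_def using lu by (simp add: n_def)
  define e where "e i = real_of_int (sylvester k ((t!i-1) div n + 1) (c+1)) * sqrt(2^q)/sqrt(2^(k+q))" for i
  have sq: "sqrt (2^q) \<noteq> (0::real)" "sqrt (2^(k+q)) \<noteq> (0::real)" by auto
  have eq: "S $$ (i,j) = e i * B $$ (i,j)" if i: "i < n" and j: "j < n" for i j
  proof -
    define a where "a = (t!i - 1) div n"
    define x where "x = (t!i - 1) mod n"
    have ti: "1 \<le> t!i \<and> t!i \<le> 2^(k+q)" using tr i lt by auto
    have tia: "t!i = a*n + x + 1" unfolding a_def x_def using ti by simp
    have "t!i - 1 < 2^k * n" using ti unfolding n_def power_add by linarith
    then have a: "a < 2^k" unfolding a_def by (simp add: less_mult_imp_div_less)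
    have x: "x < n" unfolding x_def using npos by simp
    have ui: "u ! i = x + 1" unfolding u_def x_def using i lt by simp
    have "S $$ (i,j) = real_of_int (sylvester (k+q) (a*2^q + x + 1) (c*2^q + j + 1)) / sqrt (2^(k+q))"
      unfolding S_def scattering_def unitary_H_def using i j lt ls sj tia by (simp add: n_def)
    also have "\<dots> = real_of_int (sylvester k (a+1) (c+1) * sylvester q (x+1) (j+1)) / sqrt (2^(k+q))"
      using syl_split[OF a c, of x q j] x j unfolding n_def by simp
    also have "\<dots> = e i * B $$ (i,j)"
    proof -
      have ad: "(t!i - Suc 0) div 2^q = a" unfolding a_def n_def by simp
      have uj: "[1..<2^q+1] ! j = j + 1" using j unfolding n_def by (simp del: upt_Suc)
      show ?thesis
        unfolding e_def B_def scattering_def unitary_H_def using i j lu ui sq uj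
        by (simp add: ad n_def field_simps del: upt_Suc)
    qed
    finally show ?thesis .
  qed
  have ne: "prod e {0..<n} \<noteq> 0"
  proof -
    have "e i \<noteq> 0" for i using syl_pm[of k "(t!i-1) div n + 1" "c+1"] sq unfolding e_def by auto
    then show ?thesis by simp
  qed
  have "mset (sort u) = mset u" by simp
  then obtain p where p: "p permutes {..<length u}" "permute_list p u = sort u"
    by (rule mset_eq_permutation)
  have p': "p permutes {0..<n}" using p(1) lu by (simp add: lessThan_atLeast0)
  have S'eq: "S' = mat n n (\<lambda>(i,j). B $$ (p i, j))"
  proof -
    have "sort u ! i = u ! p i" if "i < n" for i
      using that p(2)[symmetric] lu by (simp add: permute_list_def)
    then show ?thesis unfolding S'_def B_def scattering_def fs
      using lu permutes_in_image[OF p'] by (intro eq_matI) (auto simp: n_def)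
  qed
  have d: "det S = prod e {0..<n} * det B" "permanent S = prod e {0..<n} * permanent B"
    using scale_rows[OF SC BC eq] by auto
  have d': "det S' = signof p * det B" "permanent S' = permanent B"
    unfolding S'eq using det_permute_rows[OF BC p'] perm_rows[OF BC p'] by auto
  have sg: "signof p \<noteq> (0::real)" by (simp add: sign_def)
  have np: "\<And>a b. normalization a b \<noteq> 0" using norm_pos by (metis less_irrefl)
  show ?thesis
    unfolding suppressed_boson_def suppressed_fermion_def boson_amp_def fermion_amp_def
      s_def[symmetric] S_def[symmetric] S'_def[symmetric]
    using d d' ne sg np by simp
qed

end
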